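(* Let $A\in\mathbb{R}^{n\times n}$, $r\in\{1,\dots,n-1\}$ with $\mathrm{Re}(\lambda_r(A))>\mathrm{Re}(\lambda_{r+1}(A))$, let $P\in\mathbb{R}^{n\times n}$ be a permutation matrix with $Pe_i=e_{\pi(i)}$, and let $\bar U_P=\Psi P\begin{bsmallmatrix}K_r\\ O_{n-r,r}\end{bsmallmatrix}\in\mathrm{St}(r,n)$, with $K_r\in\mathbb{C}^{r\times r}$ invertible, be an equilibrium point of the Oja flow $\frac{dU}{dt}=(I_n-UU^{\top})AU$. Then the eigenvalues (with multiplicity) of $\bar U_P^{\top}A\bar U_P$ are $\lambda_{\pi(1)}(A),\dots,\lambda_{\pi(r)}(A)$.
   Context: $\mathrm{St}(r,n):=\{X\in\mathbb{R}^{n\times r}\mid X^{\top}X=I_r\}$. Eigenvalues of $A$ are ordered as $\mathrm{Re}(\lambda_1(A))\ge\dots\ge\mathrm{Re}(\lambda_n(A))$. $\Psi=[\psi_1,\dots,\psi_n]\in\mathbb{C}^{n\times n}$ is an invertible matrix of unit-norm (generalized) eigenvectors of $A$ for $\lambda_1(A),\dots,\lambda_n(A)$ with $\Psi^{-1}A\Psi$ the Jordan form of $A$. *)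

theory Defs
  imports "Jordan_Normal_Form.Jordan_Normal_Form" "HOL-Combinatorics.Permutations"
begin

(* Permutation matrix P with P e_j = e_{pi j}  (0-indexed) *)
definition perm_mat :: "nat \<Rightarrow> (nat \<Rightarrow> nat) \<Rightarrow> real mat" where
  "perm_mat n \<pi> = mat n n (\<lambda>(i,j). if i = \<pi> j then 1 else 0)"

definition stack_zero :: "nat \<Rightarrow> complex mat \<Rightarrow> complex mat" where
  "stack_zero n K = mat n (dim_col K) (\<lambda>(i,j). if i < dim_row K then K $$ (i,j) else 0)"

definition stiefel :: "nat \<Rightarrow> nat \<Rightarrow> real mat set" where
  "stiefel r n = {X. X \<in> carrier_mat n r \<and> transpose_mat X * X = 1\<^sub>m r}"

definition oja_equilibrium :: "real mat \<Rightarrow> real mat \<Rightarrow> bool" where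
  "oja_equilibrium A U \<longleftrightarrow>
     (1\<^sub>m (dim_row U) - U * transpose_mat U) * A * U = 0\<^sub>m (dim_row U) (dim_col U)"

definition jordan_basis :: "nat \<Rightarrow> real mat \<Rightarrow> complex mat \<Rightarrow> (nat \<times> complex) list \<Rightarrow> bool" where
  "jordan_basis n A \<Psi> n_as \<longleftrightarrow>
     \<Psi> \<in> carrier_mat n n \<and> invertible_mat \<Psi> \<and>
     0 \<notin> fst ` set n_as \<and> sum_list (map fst n_as) = n \<and>
     map_mat complex_of_real A * \<Psi> = \<Psi> * jordan_matrix n_as \<and>
     (\<forall>j<n. (\<Sum>i<n. (cmod (\<Psi> $$ (i,j)))\<^sup>2) = 1)"

(* eigenvalues lambda_0, ..., lambda_{n-1} as they appear on the diagonal of the Jordan form *)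
definition jordan_eig :: "(nat \<times> complex) list \<Rightarrow> nat \<Rightarrow> complex" where
  "jordan_eig n_as i = jordan_matrix n_as $$ (i,i)"

end

theory Submission
  imports Defs
begin

lemma perm_nonid_decrease:
  fixes f :: "nat \<Rightarrow> nat"
  assumes p: "p permutes {0..<r}" and inj: "inj_on f {0..<r}" and ne: "p \<noteq> id"
  shows "\<exists>a<r. f (p a) < f a"
proof (rule ccontr)
  assume "\<not> ?thesis"
  hence ge: "\<And>a. a < r \<Longrightarrow> f a \<le> f (p a)" by (meson not_less)
  have "(\<Sum>a\<in>{0..<r}. f (p a)) = (\<Sum>a\<in>{0..<r}. f a)"
    using sum.permute[OF p, of f] by (simp add: comp_def)
  hence eqs: "\<forall>a\<in>{0..<r}. f a = f (p a)"
    using sum_mono_inv[of f "{0..<r}" "\<lambda>a. f (p a)"] ge by (metis atLeastLessThan_iff finite_atLeastLessThan)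
  have "\<forall>a. p a = a"
  proof
    fix a show "p a = a"
    proof (cases "a < r")
      case True
      hence "p a \<in> {0..<r}" using p by (simp add: permutes_in_image)
      then show ?thesis using inj eqs True unfolding inj_on_def by (metis atLeastLessThan_iff zero_le)
    next
      case False thus ?thesis using p unfolding permutes_def by auto
    qed
  qed
  thus False using ne by auto
qed

lemma det_f_triangular:
  fixes B :: "'a :: comm_ring_1 mat" and f :: "nat \<Rightarrow> nat"
  assumes B: "B \<in> carrier_mat r r" and inj: "inj_on f {0..<r}"
    and z: "\<And>a b. a < r \<Longrightarrow> b < r \<Longrightarrow> f b < f a \<Longrightarrow> B $$ (a,b) = 0"
  shows "det B = (\<Prod>i=0..<r. B $$ (i,i))"
proof -
  have "det B = (\<Sum>p\<in>{p. p permutes {0..<r}}. signof p * (\<Prod>i=0..<r. B $$ (i, p i)))"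
    by (rule det_def'[OF B])
  also have "\<dots> = (\<Sum>p\<in>{id}. signof p * (\<Prod>i=0..<r. B $$ (i, p i)))"
  proof (rule sum.mono_neutral_right)
    show "finite {p. p permutes {0..<r}}" by (simp add: finite_permutations)
    show "{id} \<subseteq> {p. p permutes {0..<r}}" by (simp add: permutes_id)
    show "\<forall>i\<in>{p. p permutes {0..<r}} - {id}. signof i * (\<Prod>ia = 0..<r. B $$ (ia, i ia)) = 0"
    proof
      fix p assume "p \<in> {p. p permutes {0..<r}} - {id}"
      hence p: "p permutes {0..<r}" "p \<noteq> id" by auto
      then obtain a where a: "a < r" "f (p a) < f a" using perm_nonid_decrease inj by blast
      have "p a < r" using p(1) a(1) by (simp add: permutes_in_image)
      hence "B $$ (a, p a) = 0" using z a by auto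
      hence "(\<Prod>ia = 0..<r. B $$ (ia, p ia)) = 0" using a(1) by (intro prod_zero) auto
      thus "signof p * (\<Prod>ia = 0..<r. B $$ (ia, p ia)) = 0" by simp
    qed
  qed
  also have "\<dots> = (\<Prod>i=0..<r. B $$ (i,i))" by (simp add: sign_id)
  finally show ?thesis .
qed


lemma cmat_mult:
  assumes "X \<in> carrier_mat a b" "Y \<in> carrier_mat b c"
  shows "map_mat complex_of_real (X * Y) = map_mat complex_of_real X * map_mat complex_of_real Y"
  by (rule of_real_hom.mat_hom_mult[OF assms])

theorem proposition3:
  fixes n r :: nat and A :: "real mat" and \<Psi> :: "complex mat"
    and n_as :: "(nat \<times> complex) list" and \<pi> :: "nat \<Rightarrow> nat"
    and K :: "complex mat" and U :: "real mat"
  assumes A: "A \<in> carrier_mat n n"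
    and r: "1 \<le> r" "r < n"
    and J: "jordan_basis n A \<Psi> n_as"
    and ord: "\<forall>i. i + 1 < n \<longrightarrow> Re (jordan_eig n_as (i + 1)) \<le> Re (jordan_eig n_as i)"
    and gap: "Re (jordan_eig n_as r) < Re (jordan_eig n_as (r - 1))"
    and perm: "\<pi> permutes {..<n}"
    and K: "K \<in> carrier_mat r r" "invertible_mat K"
    and U_def: "map_mat complex_of_real U = \<Psi> * map_mat complex_of_real (perm_mat n \<pi>) * stack_zero n K"
    and St: "U \<in> stiefel r n"
    and eq: "oja_equilibrium A U"
  shows "char_poly (map_mat complex_of_real (transpose_mat U * A * U))
           = (\<Prod>i<r. [:- jordan_eig n_as (\<pi> i), 1:])"
proof -
  have U: "U \<in> carrier_mat n r" using St unfolding stiefel_def by auto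
  define M where "M = transpose_mat U * A * U"
  have M: "M \<in> carrier_mat r r" unfolding M_def using U A by auto
  have UT: "transpose_mat U \<in> carrier_mat r n" using U by auto
  have AU: "A * U = U * M"
  proof -
    have "0\<^sub>m n r = (1\<^sub>m n - U * transpose_mat U) * A * U"
      using eq U unfolding oja_equilibrium_def by auto
    also have "\<dots> = (A - U * transpose_mat U * A) * U"
      using U A UT by (subst minus_mult_distrib_mat[of _ n n]) auto
    also have "\<dots> = A * U - U * transpose_mat U * A * U"
      using U A UT by (subst minus_mult_distrib_mat[of _ n n]) auto
    also have "U * transpose_mat U * A * U = U * M"
      unfolding M_def using U A UT
      by (simp add: assoc_mult_mat[of U n r "transpose_mat U" n A] assoc_mult_mat[of U n r "transpose_mat U * A" n U r])
    finally have "0\<^sub>m n r = A * U - U * M" .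
    note z = this
    show ?thesis
    proof (rule eq_matI)
      fix i j assume ij: "i < dim_row (U * M)" "j < dim_col (U * M)"
      have "(0\<^sub>m n r :: real mat) $$ (i,j) = (A * U - U * M) $$ (i,j)" using z by simp
      thus "(A * U) $$ (i,j) = (U * M) $$ (i,j)" using ij U A M by simp
    qed (use U A M in auto)
  qed
  define Ac where "Ac = map_mat complex_of_real A"
  define Uc where "Uc = map_mat complex_of_real U"
  define Mc where "Mc = map_mat complex_of_real M"
  have AUc: "Ac * Uc = Uc * Mc"
    unfolding Ac_def Uc_def Mc_def
    using cmat_mult[OF A U] cmat_mult[OF U M] AU by simp
  have Psi: "\<Psi> \<in> carrier_mat n n" "invertible_mat \<Psi>"
    and AJ: "Ac * \<Psi> = \<Psi> * jordan_matrix n_as" and sn: "sum_list (map fst n_as) = n"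
    using J unfolding jordan_basis_def Ac_def by auto
  define JM where "JM = jordan_matrix n_as"
  have JM: "JM \<in> carrier_mat n n" unfolding JM_def using jordan_matrix_carrier[of n_as] sn by simp
  define Pc where "Pc = map_mat complex_of_real (perm_mat n \<pi>)"
  define Z where "Z = stack_zero n K"
  define Y where "Y = Pc * Z"
  have Pc: "Pc \<in> carrier_mat n n" unfolding Pc_def perm_mat_def by auto
  have Z: "Z \<in> carrier_mat n r" unfolding Z_def stack_zero_def using K by auto
  have Y: "Y \<in> carrier_mat n r" unfolding Y_def using Pc Z by auto
  have Ac: "Ac \<in> carrier_mat n n" unfolding Ac_def using A by auto
  have Mc: "Mc \<in> carrier_mat r r" unfolding Mc_def using M by auto
  have UcY: "Uc = \<Psi> * Y" unfolding Uc_def Y_def using U_def Psi Pc Z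
    by (simp add: Pc_def Z_def assoc_mult_mat[of \<Psi> n n Pc n Z r])
  have "\<Psi> * (JM * Y) = \<Psi> * (Y * Mc)"
  proof -
    have "\<Psi> * (JM * Y) = (\<Psi> * JM) * Y" using Psi JM Y by (simp add: assoc_mult_mat[of \<Psi> n n JM n Y r])
    also have "\<dots> = (Ac * \<Psi>) * Y" using AJ JM_def by simp
    also have "\<dots> = Ac * Uc" using UcY Ac Psi Y by (simp add: assoc_mult_mat[of Ac n n \<Psi> n Y r])
    also have "\<dots> = Uc * Mc" by (rule AUc)
    also have "\<dots> = \<Psi> * (Y * Mc)" using UcY Psi Y Mc by (simp add: assoc_mult_mat[of \<Psi> n n Y r Mc r])
    finally show ?thesis .
  qed
  moreover obtain Pi where Pi: "Pi \<in> carrier_mat n n" "Pi * \<Psi> = 1\<^sub>m n"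
  proof -
    obtain B where B: "\<Psi> * B = 1\<^sub>m (dim_row \<Psi>)" "B * \<Psi> = 1\<^sub>m (dim_row B)"
      using Psi(2) unfolding invertible_mat_def inverts_mat_def by blast
    have c: "dim_col B = n" using arg_cong[OF B(1), of dim_col] Psi(1) by simp
    have rr: "dim_row B = n" using arg_cong[OF B(2), of dim_col] Psi(1) by simp
    have "B \<in> carrier_mat n n" using c rr by auto
    thus ?thesis using that B(2) rr by blast
  qed
  ultimately have JY: "JM * Y = Y * Mc"
  proof -
    assume h: "\<Psi> * (JM * Y) = \<Psi> * (Y * Mc)"
    have as: "Pi * \<Psi> * X = Pi * (\<Psi> * X)" if "X \<in> carrier_mat n r" for X
      by (rule assoc_mult_mat[of Pi n n \<Psi> n X r]) (use Pi Psi that in auto)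
    have "JM * Y = 1\<^sub>m n * (JM * Y)" using JM Y by simp
    also have "\<dots> = Pi * (\<Psi> * (JM * Y))" using as[of "JM * Y"] Pi JM Y by simp
    also have "\<dots> = Pi * (\<Psi> * (Y * Mc))" using h by simp
    also have "\<dots> = 1\<^sub>m n * (Y * Mc)" using as[of "Y * Mc"] Pi Mc Y by simp
    also have "\<dots> = Y * Mc" using Mc Y by simp
    finally show ?thesis .
  qed
  have inj: "inj_on \<pi> {..<n}" using perm permutes_inj_on by blast
  have pin: "\<And>a. a < n \<Longrightarrow> \<pi> a < n" using perm permutes_in_image by fastforce
  have Yent: "Y $$ (\<pi> a, c) = Z $$ (a, c)" if a: "a < n" and c: "c < r" for a c
  proof -
    have "Y $$ (\<pi> a, c) = (\<Sum>k\<in>{0..<n}. Pc $$ (\<pi> a, k) * Z $$ (k, c))"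
      unfolding Y_def using Pc Z a c pin[OF a] by (simp add: scalar_prod_def)
    also have "\<dots> = (\<Sum>k\<in>{0..<n}. if k = a then Z $$ (k, c) else 0)"
    proof (rule sum.cong)
      fix k assume k: "k \<in> {0..<n}"
      have "(\<pi> a = \<pi> k) = (a = k)" using inj a k unfolding inj_on_def by auto
      thus "Pc $$ (\<pi> a, k) * Z $$ (k, c) = (if k = a then Z $$ (k, c) else 0)"
        unfolding Pc_def perm_mat_def using k pin[OF a] by auto
    qed simp
    also have "\<dots> = Z $$ (a, c)" using a by simp
    finally show ?thesis .
  qed
  define J11 where "J11 = mat r r (\<lambda>(a,b). JM $$ (\<pi> a, \<pi> b))"
  have J11: "J11 \<in> carrier_mat r r" unfolding J11_def by auto
  have Zent: "Z $$ (b, c) = (if b < r then K $$ (b, c) else 0)" if "b < n" "c < r" for b c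
    unfolding Z_def stack_zero_def using that K by auto
  have JK: "J11 * K = K * Mc"
  proof (rule eq_matI)
    fix a c assume "a < dim_row (K * Mc)" "c < dim_col (K * Mc)"
    hence a: "a < r" and c: "c < r" using K Mc by auto
    have an: "a < n" using a r by simp
    have bij: "bij_betw \<pi> {0..<n} {0..<n}" using perm permutes_imp_bij lessThan_atLeast0 by metis
    have "(JM * Y) $$ (\<pi> a, c) = (\<Sum>i\<in>{0..<n}. JM $$ (\<pi> a, i) * Y $$ (i, c))"
      using JM Y pin[OF an] c by (simp add: scalar_prod_def)
    also have "\<dots> = (\<Sum>b\<in>{0..<n}. JM $$ (\<pi> a, \<pi> b) * Y $$ (\<pi> b, c))"
      using sum.reindex_bij_betw[OF bij, of "\<lambda>i. JM $$ (\<pi> a, i) * Y $$ (i, c)"] by simp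
    also have "\<dots> = (\<Sum>b\<in>{0..<n}. if b < r then JM $$ (\<pi> a, \<pi> b) * K $$ (b, c) else 0)"
      by (rule sum.cong) (use Yent Zent c in auto)
    also have "\<dots> = (\<Sum>b\<in>{0..<r}. JM $$ (\<pi> a, \<pi> b) * K $$ (b, c))"
      by (rule sum.mono_neutral_cong_right) (use r in auto)
    also have "\<dots> = (J11 * K) $$ (a, c)"
      unfolding J11_def using K a c by (simp add: scalar_prod_def)
    finally have L: "(JM * Y) $$ (\<pi> a, c) = (J11 * K) $$ (a, c)" .
    have "(Y * Mc) $$ (\<pi> a, c) = (\<Sum>d\<in>{0..<r}. Y $$ (\<pi> a, d) * Mc $$ (d, c))"
      using Mc Y pin[OF an] c by (simp add: scalar_prod_def)
    also have "\<dots> = (\<Sum>d\<in>{0..<r}. K $$ (a, d) * Mc $$ (d, c))"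
      by (rule sum.cong) (use Yent Zent a an in auto)
    also have "\<dots> = (K * Mc) $$ (a, c)" using K Mc a c by (simp add: scalar_prod_def)
    finally have R: "(Y * Mc) $$ (\<pi> a, c) = (K * Mc) $$ (a, c)" .
    show "(J11 * K) $$ (a, c) = (K * Mc) $$ (a, c)" using L R JY by simp
  qed (use J11 K Mc in auto)
  obtain Ki where Ki: "Ki \<in> carrier_mat r r" "K * Ki = 1\<^sub>m r" "Ki * K = 1\<^sub>m r"
  proof -
    obtain B where B: "K * B = 1\<^sub>m (dim_row K)" "B * K = 1\<^sub>m (dim_row B)"
      using K(2) unfolding invertible_mat_def inverts_mat_def by blast
    have c: "dim_col B = r" using arg_cong[OF B(1), of dim_col] K(1) by simp
    have rr: "dim_row B = r" using arg_cong[OF B(2), of dim_col] K(1) by simp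
    have "B \<in> carrier_mat r r" using c rr by auto
    thus ?thesis using that B rr K(1) by auto
  qed
  have McS: "Mc = Ki * J11 * K"
  proof -
    have "Mc = 1\<^sub>m r * Mc" using Mc by simp
    also have "\<dots> = Ki * (K * Mc)" using Ki K Mc by (simp add: assoc_mult_mat[of Ki r r K r Mc r, symmetric])
    also have "\<dots> = Ki * (J11 * K)" using JK by simp
    also have "\<dots> = Ki * J11 * K" using Ki K J11 by (simp add: assoc_mult_mat[of Ki r r J11 r K r])
    finally show ?thesis .
  qed
  have "similar_mat Mc J11"
    unfolding similar_mat_def similar_mat_wit_def
    by (rule exI[of _ Ki], rule exI[of _ K]) (use Ki K Mc J11 McS in auto)
  hence cp: "char_poly Mc = char_poly J11" by (rule char_poly_similar)
  have injr: "inj_on \<pi> {0..<r}" using inj r by (auto simp: inj_on_def)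
  have "char_poly J11 = (\<Prod>i=0..<r. char_poly_matrix J11 $$ (i,i))"
    unfolding char_poly_def
  proof (rule det_f_triangular[OF _ injr])
    show "char_poly_matrix J11 \<in> carrier_mat r r" using J11 by simp
    fix a b assume ab: "a < r" "b < r" "\<pi> b < \<pi> a"
    have "JM $$ (\<pi> a, \<pi> b) = 0" unfolding JM_def
      by (rule jordan_matrix_upper_triangular) (use ab pin r sn in auto)
    moreover have "a \<noteq> b" using ab by auto
    ultimately show "char_poly_matrix J11 $$ (a, b) = 0"
      unfolding char_poly_matrix_def J11_def using ab by simp
  qed
  also have "\<dots> = (\<Prod>i<r. [:- jordan_eig n_as (\<pi> i), 1:])"
    unfolding lessThan_atLeast0
    by (rule prod.cong) (auto simp: char_poly_matrix_def J11_def jordan_eig_def JM_def)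
  finally show ?thesis using cp unfolding Mc_def M_def by simp
qed
end
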